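(* For every total Boolean function $f:\{0,1\}^n\to\{0,1\}$ and every $\epsilon\in[0,1/2)$, $\lambda(f)\le\frac{1}{1-2\epsilon}\,\widetilde{\deg}_\epsilon(f)$.
   Context: Here $\widetilde{\deg}_\epsilon(f)$ is the minimum degree of a real polynomial $q$ such that for all $x\in\{0,1\}^n$, $f(x)=1\Rightarrow q(x)\in[1-2\epsilon,1]$ and $f(x)=0\Rightarrow q(x)\in[-1,-1+2\epsilon]$. The sensitivity graph $G_f$ has vertex set $\{0,1\}^n$ and an edge between $x,y$ iff they differ in exactly one coordinate and $f(x)\ne f(y)$; $A_f$ is its adjacency matrix and $\lambda(f)=\|A_f\|$ (spectral norm). *)

theory Defs
  imports "HOL-Analysis.Analysis"
begin

definition cube :: "nat \<Rightarrow> bool list set" where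
  "cube n = {x. length x = n}"

definition bit :: "bool list \<Rightarrow> nat \<Rightarrow> real" where
  "bit x i = (if x ! i then 1 else 0)"

definition is_poly_deg_le :: "nat \<Rightarrow> nat \<Rightarrow> (bool list \<Rightarrow> real) \<Rightarrow> bool" where
  "is_poly_deg_le n d q \<longleftrightarrow>
     (\<exists>(A :: (nat \<Rightarrow> nat) set) (c :: (nat \<Rightarrow> nat) \<Rightarrow> real).
        finite A \<and>
        (\<forall>\<alpha>\<in>A. (\<forall>i\<ge>n. \<alpha> i = 0) \<and> (\<Sum>i<n. \<alpha> i) \<le> d) \<and>
        (\<forall>x\<in>cube n. q x = (\<Sum>\<alpha>\<in>A. c \<alpha> * (\<Prod>i<n. bit x i ^ \<alpha> i))))"

text \<open>epsilon-approximating polynomial in the +-1 output convention of the paper.\<close>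
definition eps_approx :: "nat \<Rightarrow> real \<Rightarrow> (bool list \<Rightarrow> bool) \<Rightarrow> (bool list \<Rightarrow> real) \<Rightarrow> bool" where
  "eps_approx n \<epsilon> f q \<longleftrightarrow>
     (\<forall>x\<in>cube n. (f x \<longrightarrow> 1 - 2*\<epsilon> \<le> q x \<and> q x \<le> 1) \<and>
                  (\<not> f x \<longrightarrow> -1 \<le> q x \<and> q x \<le> -1 + 2*\<epsilon>))"

definition approx_deg :: "nat \<Rightarrow> real \<Rightarrow> (bool list \<Rightarrow> bool) \<Rightarrow> nat" where
  "approx_deg n \<epsilon> f = (LEAST d. \<exists>q. is_poly_deg_le n d q \<and> eps_approx n \<epsilon> f q)"

definition sens_adj :: "nat \<Rightarrow> (bool list \<Rightarrow> bool) \<Rightarrow> bool list \<Rightarrow> bool list \<Rightarrow> real" where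
  "sens_adj n f x y =
     (if x \<in> cube n \<and> y \<in> cube n \<and> card {i. i < n \<and> x ! i \<noteq> y ! i} = 1 \<and> f x \<noteq> f y
      then 1 else 0)"

definition sens_lambda :: "nat \<Rightarrow> (bool list \<Rightarrow> bool) \<Rightarrow> real" where
  "sens_lambda n f =
     Sup {sqrt (\<Sum>x\<in>cube n. (\<Sum>y\<in>cube n. sens_adj n f x y * v y)^2) | v.
            (\<Sum>x\<in>cube n. (v x)^2) = 1}"

end

theory Submission
  imports Defs
begin


definition th :: "nat \<Rightarrow> nat \<Rightarrow> real" where
  "th d k = (2 * real k + 1) * pi / (2 * real d)"

definition wt :: "nat \<Rightarrow> nat \<Rightarrow> real" where
  "wt d k = (-1)^k / (4 * real d * (sin (th d k / 2))^2)"

lemma th_half_bounds: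
  assumes "d > 0" "k < 2*d"
  shows "0 < th d k / 2" "th d k / 2 < pi"
proof -
  have "0 < (2 * real k + 1) * pi / (2 * real d)"
    using assms by (intro divide_pos_pos mult_pos_pos) simp_all
  then show "0 < th d k / 2" unfolding th_def by simp
  have "2 * real k + 1 < 4 * real d" using assms by linarith
  then have "(2 * real k + 1) * pi < (4 * real d) * pi" by simp
  then show "th d k / 2 < pi" unfolding th_def using assms by (simp add: field_simps)
qed

lemma sin_half_pos: "d > 0 \<Longrightarrow> k < 2*d \<Longrightarrow> sin (th d k / 2) > 0"
  using th_half_bounds sin_gt_zero by blast

lemma alt_telescope:
  fixes t :: "nat \<Rightarrow> real"
  shows "(\<Sum>k<N. (-1)^k * (t (Suc k) + t k)) = t 0 - (-1)^N * t N"
  by (induction N) (simp_all add: algebra_simps)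

lemma cos_sum_zero:
  assumes d: "d > 0" and m1: "1 \<le> m" and m2: "m < 2*d"
  shows "(\<Sum>k<2*d. cos (real m * th d k)) = 0"
proof -
  define a where "a = real m * pi / (2 * real d)"
  define t where "t k = sin (real m * real k * pi / real d)" for k
  have key: "2 * sin a * cos (real m * th d k) = t (Suc k) - t k" for k
  proof -
    have "2 * sin a * cos (real m * th d k) = sin (real m * th d k + a) - sin (real m * th d k - a)"
      using cos_times_sin[of "real m * th d k" a] by (simp add: algebra_simps)
    moreover have "real m * th d k + a = real m * real (Suc k) * pi / real d"
      unfolding a_def th_def using d by (simp add: field_simps)
    moreover have "real m * th d k - a = real m * real k * pi / real d"
      unfolding a_def th_def using d by (simp add: field_simps)
    ultimately show ?thesis unfolding t_def by simp
  qed
  have "2 * sin a * (\<Sum>k<2*d. cos (real m * th d k)) = (\<Sum>k<2*d. t (Suc k) - t k)"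
    by (simp add: sum_distrib_left key)
  also have "\<dots> = t (2*d) - t 0" by (rule sum_lessThan_telescope)
  also have "t (2*d) = sin (real (2*m) * pi)" unfolding t_def using d by (simp add: field_simps)
  also have "\<dots> = 0" by (rule sin_npi)
  finally have "2 * sin a * (\<Sum>k<2*d. cos (real m * th d k)) = 0" by (simp add: t_def)
  moreover have "sin a > 0"
  proof (rule sin_gt_zero)
    show "0 < a" unfolding a_def using d m1 by simp
    have "real m * pi < (2 * real d) * pi" using m2 by simp
    then show "a < pi" unfolding a_def using d by (simp add: field_simps)
  qed
  ultimately show ?thesis by simp
qed

lemma alt_sin_sum_zero:
  assumes d: "d > 0" and m2: "m < d"
  shows "(\<Sum>k<2*d. (-1)^k * sin (real m * th d k)) = 0"
proof -
  define a where "a = real m * pi / (2 * real d)"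
  define t where "t k = sin (real m * real k * pi / real d)" for k
  have key: "2 * cos a * sin (real m * th d k) = t (Suc k) + t k" for k
  proof -
    have "2 * cos a * sin (real m * th d k) = sin (real m * th d k + a) + sin (real m * th d k - a)"
      using sin_times_cos[of "real m * th d k" a] by (simp add: algebra_simps)
    moreover have "real m * th d k + a = real m * real (Suc k) * pi / real d"
      unfolding a_def th_def using d by (simp add: field_simps)
    moreover have "real m * th d k - a = real m * real k * pi / real d"
      unfolding a_def th_def using d by (simp add: field_simps)
    ultimately show ?thesis unfolding t_def by simp
  qed
  have "2 * cos a * (\<Sum>k<2*d. (-1)^k * sin (real m * th d k)) = (\<Sum>k<2*d. (-1)^k * (t (Suc k) + t k))"
    unfolding sum_distrib_left
  proof (rule sum.cong[OF refl])
    fix k show "2 * cos a * ((-1)^k * sin (real m * th d k)) = (-1)^k * (t (Suc k) + t k)"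
    proof -
      have "2 * cos a * ((-1)^k * sin (real m * th d k)) = (-1)^k * (2 * cos a * sin (real m * th d k))"
        by (rule mult.left_commute)
      also have "\<dots> = (-1)^k * (t (Suc k) + t k)" by (simp only: key)
      finally show ?thesis .
    qed
  qed
  also have "\<dots> = t 0 - (-1)^(2*d) * t (2*d)" by (rule alt_telescope)
  also have "t (2*d) = sin (real (2*m) * pi)" unfolding t_def using d by (simp add: field_simps)
  also have "\<dots> = 0" by (rule sin_npi)
  finally have "2 * cos a * (\<Sum>k<2*d. (-1)^k * sin (real m * th d k)) = 0" by (simp add: t_def)
  moreover have "cos a > 0"
  proof (rule cos_gt_zero_pi)
    have "0 \<le> a" unfolding a_def by simp
    then show "- (pi/2) < a" using pi_gt_zero by linarith
    have "real m * pi < real d * pi" using m2 by simp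
    then show "a < pi/2" unfolding a_def using d by (simp add: field_simps)
  qed
  ultimately show ?thesis by simp
qed

lemma cos_d_th: "d > 0 \<Longrightarrow> cos (real d * th d k) = 0"
proof -
  assume d: "d > 0"
  have "real d * th d k = real k * pi + pi/2" unfolding th_def using d by (simp add: field_simps)
  then show ?thesis by (simp add: cos_add)
qed

lemma sin_d_th: "d > 0 \<Longrightarrow> sin (real d * th d k) = (-1)^k"
proof -
  assume d: "d > 0"
  have "real d * th d k = real k * pi + pi/2" unfolding th_def using d by (simp add: field_simps)
  then show ?thesis by (simp add: sin_add)
qed

definition EE :: "nat \<Rightarrow> nat \<Rightarrow> real" where
  "EE d m = (\<Sum>k<2*d. (1 - cos (real m * th d k)) / (sin (th d k / 2))^2)"

definition FF :: "nat \<Rightarrow> nat \<Rightarrow> real" where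
  "FF d m = (\<Sum>k<2*d. wt d k * sin (real m * th d k))"

lemma cos_second_diff:
  fixes x t :: real
  shows "(1 - cos (x + t)) - 2 * (1 - cos x) + (1 - cos (x - t)) = 4 * (sin (t/2))^2 * cos x"
proof -
  have c: "cos t = 1 - 2 * (sin (t/2))^2" using cos_double_sin[of "t/2"] by simp
  show ?thesis by (simp add: cos_add cos_diff c algebra_simps)
qed

lemma sin_second_diff:
  fixes x t :: real
  shows "sin (x + t) - 2 * sin x + sin (x - t) = - 4 * (sin (t/2))^2 * sin x"
proof -
  have c: "cos t = 1 - 2 * (sin (t/2))^2" using cos_double_sin[of "t/2"] by simp
  show ?thesis by (simp add: sin_add sin_diff c algebra_simps)
qed

lemma EE_rec:
  assumes d: "d > 0"
  shows "EE d (Suc (Suc m)) - 2 * EE d (Suc m) + EE d m = 4 * (\<Sum>k<2*d. cos (real (Suc m) * th d k))"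
proof -
  have "EE d (Suc (Suc m)) - 2 * EE d (Suc m) + EE d m =
    (\<Sum>k<2*d. ((1 - cos (real (Suc m) * th d k + th d k)) - 2 * (1 - cos (real (Suc m) * th d k))
         + (1 - cos (real (Suc m) * th d k - th d k))) / (sin (th d k / 2))^2)"
    unfolding EE_def sum_subtractf[symmetric] sum.distrib[symmetric] sum_distrib_left
    by (rule sum.cong) (simp_all add: algebra_simps diff_divide_distrib add_divide_distrib)
  also have "\<dots> = (\<Sum>k<2*d. 4 * cos (real (Suc m) * th d k))"
  proof (rule sum.cong[OF refl])
    fix k assume "k \<in> {..<2*d}"
    then have "sin (th d k / 2) > 0" using sin_half_pos d by simp
    then show "((1 - cos (real (Suc m) * th d k + th d k)) - 2 * (1 - cos (real (Suc m) * th d k))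
         + (1 - cos (real (Suc m) * th d k - th d k))) / (sin (th d k / 2))^2 = 4 * cos (real (Suc m) * th d k)"
      unfolding cos_second_diff by (simp add: field_simps)
  qed
  finally show ?thesis by (simp add: sum_distrib_left)
qed

lemma EE_0: "EE d 0 = 0" unfolding EE_def by simp

lemma EE_1: assumes d: "d > 0" shows "EE d 1 = 4 * real d"
proof -
  have "EE d 1 = (\<Sum>k<2*d. 2)"
    unfolding EE_def
  proof (rule sum.cong[OF refl])
    fix k assume "k \<in> {..<2*d}"
    then have "sin (th d k / 2) > 0" using sin_half_pos d by simp
    moreover have "cos (th d k) = 1 - 2 * (sin (th d k/2))^2" using cos_double_sin[of "th d k/2"] by simp
    ultimately show "(1 - cos (real 1 * th d k)) / (sin (th d k / 2))\<^sup>2 = 2" by (simp add: field_simps)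
  qed
  then show ?thesis by simp
qed

lemma EE_diff: assumes d: "d > 0" shows "Suc m \<le> 2*d \<Longrightarrow> EE d (Suc m) - EE d m = 4 * real d"
proof (induction m)
  case 0 then show ?case using EE_0 EE_1[OF d] by simp
next
  case (Suc m)
  have "(\<Sum>k<2*d. cos (real (Suc m) * th d k)) = 0"
    using cos_sum_zero[OF d, of "Suc m"] Suc.prems by simp
  then show ?case using EE_rec[OF d, of m] Suc by simp
qed

lemma EE_lin: assumes d: "d > 0" shows "m \<le> 2*d \<Longrightarrow> EE d m = 4 * real d * real m"
proof (induction m)
  case 0 then show ?case using EE_0 by simp
next
  case (Suc m) then show ?case using EE_diff[OF d, of m] by (simp add: algebra_simps)
qed

lemma sum_inv_sin2: assumes d: "d > 0"
  shows "(\<Sum>k<2*d. 1 / (sin (th d k / 2))^2) = 4 * real d * real d"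
proof -
  have "EE d d = (\<Sum>k<2*d. 1 / (sin (th d k / 2))^2)"
    unfolding EE_def using cos_d_th[OF d] by simp
  then show ?thesis using EE_lin[OF d, of d] by simp
qed

lemma sum_abs_wt: assumes d: "d > 0" shows "(\<Sum>k<2*d. \<bar>wt d k\<bar>) = real d"
proof -
  have "(\<Sum>k<2*d. \<bar>wt d k\<bar>) = (\<Sum>k<2*d. 1 / (sin (th d k / 2))^2) / (4 * real d)"
    unfolding sum_divide_distrib
  proof (rule sum.cong[OF refl])
    fix k assume "k \<in> {..<2*d}"
    then have "sin (th d k / 2) > 0" using sin_half_pos d by simp
    then show "\<bar>wt d k\<bar> = 1 / (sin (th d k / 2))\<^sup>2 / (4 * real d)"
      unfolding wt_def using d by (simp add: abs_mult power_abs)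
  qed
  then show ?thesis using sum_inv_sin2[OF d] d by simp
qed

lemma FF_rec:
  assumes d: "d > 0"
  shows "FF d (Suc (Suc m)) - 2 * FF d (Suc m) + FF d m = - (\<Sum>k<2*d. (-1)^k * sin (real (Suc m) * th d k)) / real d"
proof -
  have "FF d (Suc (Suc m)) - 2 * FF d (Suc m) + FF d m =
    (\<Sum>k<2*d. wt d k * (sin (real (Suc m) * th d k + th d k) - 2 * sin (real (Suc m) * th d k)
         + sin (real (Suc m) * th d k - th d k)))"
    unfolding FF_def sum_subtractf[symmetric] sum.distrib[symmetric] sum_distrib_left
    by (rule sum.cong) (simp_all add: algebra_simps)
  also have "\<dots> = (\<Sum>k<2*d. - ((-1)^k * sin (real (Suc m) * th d k)) / real d)"
  proof (rule sum.cong[OF refl])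
    fix k assume "k \<in> {..<2*d}"
    then have "sin (th d k / 2) > 0" using sin_half_pos d by simp
    then show "wt d k * (sin (real (Suc m) * th d k + th d k) - 2 * sin (real (Suc m) * th d k)
         + sin (real (Suc m) * th d k - th d k)) = - ((-1)^k * sin (real (Suc m) * th d k)) / real d"
      unfolding sin_second_diff wt_def using d by (simp add: field_simps)
  qed
  finally show ?thesis by (simp add: sum_divide_distrib sum_negf)
qed

lemma FF_0: "FF d 0 = 0" unfolding FF_def by simp

lemma FF_d: assumes d: "d > 0" shows "FF d d = real d"
proof -
  have "FF d d = (\<Sum>k<2*d. 1 / (sin (th d k / 2))^2) / (4 * real d)"
    unfolding FF_def sum_divide_distrib
  proof (rule sum.cong[OF refl])
    fix k assume "k \<in> {..<2*d}"
    have "(-1::real)^k * (-1)^k = 1" by (simp add: power_mult_distrib[symmetric])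
    then show "wt d k * sin (real d * th d k) = 1 / (sin (th d k / 2))\<^sup>2 / (4 * real d)"
      unfolding wt_def sin_d_th[OF d] by simp
  qed
  then show ?thesis using sum_inv_sin2[OF d] d by simp
qed

lemma FF_diff: assumes d: "d > 0" shows "Suc m \<le> d \<Longrightarrow> FF d (Suc m) - FF d m = FF d 1"
proof (induction m)
  case 0 then show ?case using FF_0 by simp
next
  case (Suc m)
  have "(\<Sum>k<2*d. (-1)^k * sin (real (Suc m) * th d k)) = 0"
    using alt_sin_sum_zero[OF d, of "Suc m"] Suc.prems by simp
  then show ?case using FF_rec[OF d, of m] Suc by simp
qed

lemma FF_lin0: assumes d: "d > 0" shows "m \<le> d \<Longrightarrow> FF d m = FF d 1 * real m"
proof (induction m)
  case 0 then show ?case using FF_0 by simp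
next
  case (Suc m) then show ?case using FF_diff[OF d, of m] by (simp add: algebra_simps)
qed

lemma FF_lin: assumes d: "d > 0" and "m \<le> d" shows "FF d m = real m"
proof -
  have "FF d 1 * real d = real d" using FF_lin0[OF d, of d] FF_d[OF d] by simp
  then have "FF d 1 = 1" using d by simp
  then show ?thesis using FF_lin0[OF d assms(2)] by simp
qed

lemma riesz_int:
  assumes d: "d > 0" and "\<bar>m\<bar> \<le> int d"
  shows "(\<Sum>k<2*d. wt d k * sin (real_of_int m * th d k)) = real_of_int m"
proof (cases "m \<ge> 0")
  case True
  then obtain j where j: "m = int j" by (metis nonneg_eq_int)
  then show ?thesis using FF_lin[OF d, of j] assms(2) unfolding FF_def by simp
next
  case False
  then obtain j where j: "m = - int j" by (metis neg_int_cases nat_le_0 le_less_linear)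
  have "(\<Sum>k<2*d. wt d k * sin (real_of_int m * th d k)) = - FF d j"
    unfolding FF_def j by (simp add: sum_negf[symmetric])
  then show ?thesis using FF_lin[OF d, of j] assms(2) j by simp
qed



lemma cs2:
  assumes "x1 \<ge> 0" "x2 \<ge> 0" "y1 \<ge> 0" "y2 \<ge> 0"
  shows "sqrt x1 * sqrt y1 + sqrt x2 * sqrt y2 \<le> sqrt (x1 + x2) * sqrt (y1 + y2)"
proof -
  define p where "p = sqrt x1"
  define q where "q = sqrt y1"
  define r where "r = sqrt x2"
  define s where "s = sqrt y2"
  have x1: "x1 = p^2" and x2: "x2 = r^2" and y1: "y1 = q^2" and y2: "y2 = s^2"
    using assms by (simp_all add: p_def q_def r_def s_def)
  have "(p * q + r * s)^2 \<le> (p^2 + r^2) * (q^2 + s^2)"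
  proof -
    have "(p^2 + r^2) * (q^2 + s^2) - (p * q + r * s)^2 = (p * s - r * q)^2" by (simp add: power2_eq_square algebra_simps)
    then show ?thesis by (smt (verit) zero_le_power2)
  qed
  then have "p * q + r * s \<le> sqrt ((p^2 + r^2) * (q^2 + s^2))" by (rule real_le_rsqrt)
  moreover have "p^2 + r^2 = x1 + x2" "q^2 + s^2 = y1 + y2" using x1 x2 y1 y2 by simp_all
  ultimately show ?thesis by (simp add: p_def q_def r_def s_def real_sqrt_mult)
qed

lemma bernstein_abstract:
  fixes P :: "'a set" and sz :: "'a \<Rightarrow> nat" and K :: "'a \<Rightarrow> 'a \<Rightarrow> real" and a b :: "'a \<Rightarrow> real"
  assumes fin: "finite P"
    and band: "\<And>S R. S \<in> P \<Longrightarrow> R \<in> P \<Longrightarrow> K S R \<noteq> 0 \<Longrightarrow> \<bar>int (sz S) - int (sz R)\<bar> \<le> int d"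
    and bnd: "\<And>\<alpha> \<beta>. \<bar>\<Sum>S\<in>P. \<Sum>R\<in>P. \<alpha> S * \<beta> R * K S R\<bar>
                 \<le> M * sqrt (\<Sum>S\<in>P. (\<alpha> S)^2) * sqrt (\<Sum>R\<in>P. (\<beta> R)^2)"
    and M: "M \<ge> 0"
  shows "\<bar>\<Sum>S\<in>P. \<Sum>R\<in>P. a S * b R * (real (sz S) - real (sz R)) * K S R\<bar>
           \<le> real d * M * sqrt (\<Sum>S\<in>P. (a S)^2) * sqrt (\<Sum>R\<in>P. (b R)^2)"
proof (cases "d = 0")
  case True
  have "(\<Sum>S\<in>P. \<Sum>R\<in>P. a S * b R * (real (sz S) - real (sz R)) * K S R) = 0"
  proof (intro sum.neutral ballI)
    fix S R assume "S \<in> P" "R \<in> P"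
    then show "a S * b R * (real (sz S) - real (sz R)) * K S R = 0"
      using band[of S R] True by (cases "K S R = 0") auto
  qed
  then show ?thesis using M True by simp
next
  case False
  then have d: "d > 0" by simp
  define g where "g \<theta> = (\<Sum>S\<in>P. \<Sum>R\<in>P. a S * b R * sin ((real (sz S) - real (sz R)) * \<theta>) * K S R)" for \<theta>
  define NA where "NA = sqrt (\<Sum>S\<in>P. (a S)^2)"
  define NB where "NB = sqrt (\<Sum>R\<in>P. (b R)^2)"
  have gb: "\<bar>g \<theta>\<bar> \<le> M * NA * NB" for \<theta>
  proof -
    define As where "As S = a S * sin (real (sz S) * \<theta>)" for S
    define Ac where "Ac S = a S * cos (real (sz S) * \<theta>)" for S
    define Bs where "Bs S = b S * sin (real (sz S) * \<theta>)" for S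
    define Bc where "Bc S = b S * cos (real (sz S) * \<theta>)" for S
    have split: "g \<theta> = (\<Sum>S\<in>P. \<Sum>R\<in>P. As S * Bc R * K S R) - (\<Sum>S\<in>P. \<Sum>R\<in>P. Ac S * Bs R * K S R)"
      unfolding g_def sum_subtractf[symmetric]
      by (intro sum.cong refl) (simp add: As_def Ac_def Bs_def Bc_def left_diff_distrib sin_diff algebra_simps)
    have sa: "(\<Sum>S\<in>P. (As S)^2) + (\<Sum>S\<in>P. (Ac S)^2) = (\<Sum>S\<in>P. (a S)^2)"
      unfolding sum.distrib[symmetric] As_def Ac_def
      by (intro sum.cong refl) (simp add: power_mult_distrib distrib_left[symmetric])
    have sb: "(\<Sum>S\<in>P. (Bc S)^2) + (\<Sum>S\<in>P. (Bs S)^2) = (\<Sum>S\<in>P. (b S)^2)"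
      unfolding sum.distrib[symmetric] Bs_def Bc_def
      by (intro sum.cong refl) (simp add: power_mult_distrib distrib_left[symmetric])
    have "\<bar>g \<theta>\<bar> \<le> \<bar>\<Sum>S\<in>P. \<Sum>R\<in>P. As S * Bc R * K S R\<bar> + \<bar>\<Sum>S\<in>P. \<Sum>R\<in>P. Ac S * Bs R * K S R\<bar>"
      unfolding split by linarith
    also have "\<dots> \<le> M * sqrt (\<Sum>S\<in>P. (As S)^2) * sqrt (\<Sum>R\<in>P. (Bc R)^2) + M * sqrt (\<Sum>S\<in>P. (Ac S)^2) * sqrt (\<Sum>R\<in>P. (Bs R)^2)"
      by (intro add_mono bnd)
    also have "\<dots> = M * (sqrt (\<Sum>S\<in>P. (As S)^2) * sqrt (\<Sum>R\<in>P. (Bc R)^2) + sqrt (\<Sum>S\<in>P. (Ac S)^2) * sqrt (\<Sum>R\<in>P. (Bs R)^2))"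
      by (simp add: algebra_simps)
    also have "\<dots> \<le> M * (sqrt ((\<Sum>S\<in>P. (As S)^2) + (\<Sum>S\<in>P. (Ac S)^2)) * sqrt ((\<Sum>S\<in>P. (Bc S)^2) + (\<Sum>S\<in>P. (Bs S)^2)))"
      by (intro mult_left_mono cs2 M sum_nonneg) auto
    also have "\<dots> = M * NA * NB" unfolding sa sb NA_def NB_def by simp
    finally show ?thesis .
  qed
  have main: "(\<Sum>S\<in>P. \<Sum>R\<in>P. a S * b R * (real (sz S) - real (sz R)) * K S R) = (\<Sum>k<2*d. wt d k * g (th d k))"
  proof -
    have "(\<Sum>S\<in>P. \<Sum>R\<in>P. a S * b R * (real (sz S) - real (sz R)) * K S R)
        = (\<Sum>S\<in>P. \<Sum>R\<in>P. \<Sum>k<2*d. wt d k * (a S * b R * sin ((real (sz S) - real (sz R)) * th d k) * K S R))"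
    proof (intro sum.cong refl)
      fix S R assume SR: "S \<in> P" "R \<in> P"
      show "a S * b R * (real (sz S) - real (sz R)) * K S R =
            (\<Sum>k<2*d. wt d k * (a S * b R * sin ((real (sz S) - real (sz R)) * th d k) * K S R))"
      proof (cases "K S R = 0")
        case True then show ?thesis by simp
      next
        case False
        have r: "(\<Sum>k<2*d. wt d k * sin (real_of_int (int (sz S) - int (sz R)) * th d k)) = real_of_int (int (sz S) - int (sz R))"
          by (rule riesz_int[OF d band[OF SR False]])
        have "(\<Sum>k<2*d. wt d k * (a S * b R * sin ((real (sz S) - real (sz R)) * th d k) * K S R))
            = a S * b R * (\<Sum>k<2*d. wt d k * sin (real_of_int (int (sz S) - int (sz R)) * th d k)) * K S R"
          by (simp add: sum_distrib_left sum_distrib_right algebra_simps)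
        also have "\<dots> = a S * b R * (real (sz S) - real (sz R)) * K S R" unfolding r by simp
        finally show ?thesis by simp
      qed
    qed
    also have "\<dots> = (\<Sum>k<2*d. wt d k * g (th d k))"
      unfolding g_def sum_distrib_left
      by (subst sum.swap, rule sum.cong[OF refl], subst sum.swap, rule refl)
    finally show ?thesis .
  qed
  have "\<bar>\<Sum>k<2*d. wt d k * g (th d k)\<bar> \<le> (\<Sum>k<2*d. \<bar>wt d k\<bar> * (M * NA * NB))"
    by (rule order_trans[OF sum_abs], rule sum_mono) (simp add: abs_mult mult_left_mono gb)
  also have "\<dots> = real d * (M * NA * NB)" using sum_abs_wt[OF d] by (simp add: sum_distrib_right[symmetric])
  finally show ?thesis unfolding main NA_def NB_def by (simp add: mult.assoc)
qed



definition sg :: "bool \<Rightarrow> real" where "sg b = (if b then -1 else 1)"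

definition chi :: "nat \<Rightarrow> nat set \<Rightarrow> bool list \<Rightarrow> real" where
  "chi n S x = (\<Prod>i<n. if i \<in> S then sg (x!i) else 1)"

definition hat :: "nat \<Rightarrow> (bool list \<Rightarrow> real) \<Rightarrow> nat set \<Rightarrow> real" where
  "hat n u S = (\<Sum>x\<in>cube n. u x * chi n S x) / 2^n"

definition flip :: "bool list \<Rightarrow> nat \<Rightarrow> bool list" where
  "flip x i = x[i := \<not> x!i]"

lemma finite_cube[simp]: "finite (cube n)"
proof -
  have "cube n = {xs. set xs \<subseteq> UNIV \<and> length xs = n}" unfolding cube_def by simp
  then show ?thesis using finite_lists_length_eq[of "UNIV :: bool set" n] by simp
qed

lemma cube_Suc: "cube (Suc n) = (\<lambda>(xs, b). xs @ [b]) ` (cube n \<times> UNIV)"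
proof (rule set_eqI, rule iffI)
  fix y assume "y \<in> cube (Suc n)"
  then have "length y = Suc n" by (simp add: cube_def)
  then obtain xs b where "y = xs @ [b]" "length xs = n"
    by (metis append_butlast_last_id length_butlast length_greater_0_conv diff_Suc_1 zero_less_Suc)
  then show "y \<in> (\<lambda>(xs, b). xs @ [b]) ` (cube n \<times> UNIV)" by (force simp: cube_def)
qed (auto simp: cube_def)

lemma cube_prod_sum:
  fixes g :: "nat \<Rightarrow> bool \<Rightarrow> real"
  shows "(\<Sum>x\<in>cube n. \<Prod>i<n. g i (x!i)) = (\<Prod>i<n. g i True + g i False)"
proof (induction n)
  case 0
  have "cube 0 = {[]}" by (auto simp: cube_def)
  then show ?case by simp
next
  case (Suc n)
  have inj: "inj_on (\<lambda>(xs, b). xs @ [b]) (cube n \<times> (UNIV :: bool set))"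
    by (auto simp: inj_on_def)
  have "(\<Sum>x\<in>cube (Suc n). \<Prod>i<Suc n. g i (x!i))
      = (\<Sum>p\<in>cube n \<times> (UNIV::bool set). \<Prod>i<Suc n. g i (((\<lambda>(xs, b). xs @ [b]) p)!i))"
    unfolding cube_Suc by (rule sum.reindex[OF inj, unfolded comp_def])
  also have "\<dots> = (\<Sum>p\<in>cube n \<times> (UNIV::bool set). (\<Prod>i<n. g i (fst p ! i)) * g n (snd p))"
  proof (rule sum.cong[OF refl])
    fix p assume "p \<in> cube n \<times> (UNIV::bool set)"
    then obtain xs b where p: "p = (xs, b)" "length xs = n" by (auto simp: cube_def)
    have "(\<Prod>i<n. g i ((xs @ [b]) ! i)) = (\<Prod>i<n. g i (xs ! i))"
      by (rule prod.cong) (auto simp: nth_append p)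
    then show "(\<Prod>i<Suc n. g i (((\<lambda>(xs, b). xs @ [b]) p)!i)) = (\<Prod>i<n. g i (fst p ! i)) * g n (snd p)"
      using p by (simp add: prod.lessThan_Suc nth_append)
  qed
  also have "\<dots> = (\<Sum>xs\<in>cube n. \<Sum>b\<in>(UNIV::bool set). (\<Prod>i<n. g i (xs ! i)) * g n b)"
    by (rule sum.cartesian_product[symmetric, unfolded split_def])
  also have "\<dots> = (\<Sum>xs\<in>cube n. (\<Prod>i<n. g i (xs ! i))) * (g n True + g n False)"
    by (simp add: UNIV_bool sum_distrib_right distrib_left sum.distrib add.commute)
  also have "\<dots> = (\<Prod>i<Suc n. g i True + g i False)" using Suc by (simp add: prod.lessThan_Suc)
  finally show ?case .
qed

lemma sg_sq[simp]: "sg b * sg b = 1" by (simp add: sg_def)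

definition symd :: "nat set \<Rightarrow> nat set \<Rightarrow> nat set" where
  "symd S R = (S - R) \<union> (R - S)"

lemma chi_mult: "chi n S x * chi n R x = chi n (symd S R) x"
  unfolding chi_def prod.distrib[symmetric]
  by (rule prod.cong) (auto simp: symd_def)

lemma sum_chi:
  assumes "T \<subseteq> {..<n}"
  shows "(\<Sum>x\<in>cube n. chi n T x) = (if T = {} then 2^n else 0)"
proof -
  have "(\<Sum>x\<in>cube n. chi n T x) = (\<Prod>i<n. (if i \<in> T then sg True else 1) + (if i \<in> T then sg False else 1))"
    unfolding chi_def by (rule cube_prod_sum)
  also have "\<dots> = (\<Prod>i<n. if i \<in> T then 0 else 2)"
    by (rule prod.cong) (auto simp: sg_def)
  also have "\<dots> = (if T = {} then 2^n else 0)"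
  proof (cases "T = {}")
    case True then show ?thesis by simp
  next
    case False
    then obtain i where "i \<in> T" by auto
    then have "i \<in> {..<n}" using assms by auto
    then show ?thesis using False \<open>i \<in> T\<close> by (intro trans[OF prod_zero]) auto
  qed
  finally show ?thesis .
qed

lemma symd_sub: "S \<subseteq> {..<n} \<Longrightarrow> R \<subseteq> {..<n} \<Longrightarrow> symd S R \<subseteq> {..<n}"
  by (auto simp: symd_def)

lemma symd_empty: "symd S R = {} \<longleftrightarrow> S = R"
  by (auto simp: symd_def)

lemma orth:
  assumes "S \<subseteq> {..<n}" "R \<subseteq> {..<n}"
  shows "(\<Sum>x\<in>cube n. chi n S x * chi n R x) = (if S = R then 2^n else 0)"
  unfolding chi_mult using sum_chi[OF symd_sub[OF assms]] symd_empty by simp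

lemma sum_PS_chi:
  assumes x: "x \<in> cube n" and y: "y \<in> cube n"
  shows "(\<Sum>S\<in>Pow {..<n}. chi n S x * chi n S y) = (if x = y then 2^n else 0)"
proof -
  define t where "t i = sg (x!i) * sg (y!i)" for i
  have "(\<Sum>S\<in>Pow {..<n}. chi n S x * chi n S y) = (\<Sum>S\<in>Pow {..<n}. (\<Prod>i\<in>S. t i) * (\<Prod>i\<in>{..<n}-S. 1))"
  proof (rule sum.cong[OF refl])
    fix S assume S: "S \<in> Pow {..<n}"
    have "chi n S x * chi n S y = (\<Prod>i<n. if i \<in> S then t i else 1)"
      unfolding chi_def prod.distrib[symmetric] t_def by (rule prod.cong) auto
    also have "\<dots> = (\<Prod>i\<in>{..<n} \<inter> S. t i)" by (rule prod.inter_restrict[symmetric]) simp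
    also have "{..<n} \<inter> S = S" using S by auto
    finally show "chi n S x * chi n S y = (\<Prod>i\<in>S. t i) * (\<Prod>i\<in>{..<n}-S. 1)" by simp
  qed
  also have "\<dots> = (\<Prod>i<n. t i + 1)" by (rule prod_add[symmetric]) simp
  also have "\<dots> = (\<Prod>i<n. if x!i = y!i then 2 else 0)"
    by (rule prod.cong) (auto simp: t_def sg_def)
  also have "\<dots> = (if x = y then 2^n else 0)"
  proof (cases "x = y")
    case True then show ?thesis by simp
  next
    case False
    have "\<exists>i<n. x!i \<noteq> y!i"
    proof (rule ccontr)
      assume "\<not> (\<exists>i<n. x!i \<noteq> y!i)"
      then have "x = y" using x y by (intro nth_equalityI) (auto simp: cube_def)
      then show False using False by simp
    qed
    then obtain i where "i < n" "x!i \<noteq> y!i" by auto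
    then show ?thesis using False by (intro trans[OF prod_zero]) auto
  qed
  finally show ?thesis .
qed

lemma expansion:
  assumes x: "x \<in> cube n"
  shows "(\<Sum>S\<in>Pow {..<n}. hat n u S * chi n S x) = u x"
proof -
  have "(\<Sum>S\<in>Pow {..<n}. hat n u S * chi n S x)
      = (\<Sum>S\<in>Pow {..<n}. \<Sum>y\<in>cube n. u y * (chi n S y * chi n S x)) / 2^n"
    unfolding hat_def sum_divide_distrib sum_distrib_right by (simp add: mult.assoc)
  also have "\<dots> = (\<Sum>y\<in>cube n. u y * (\<Sum>S\<in>Pow {..<n}. chi n S y * chi n S x)) / 2^n"
    by (subst sum.swap) (simp add: sum_distrib_left)
  also have "\<dots> = (\<Sum>y\<in>cube n. if y = x then u y * 2^n else 0) / 2^n"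
    by (intro arg_cong[where f="\<lambda>t. t / 2^n"] sum.cong refl) (simp add: sum_PS_chi x)
  also have "\<dots> = u x" using x by simp
  finally show ?thesis .
qed

lemma parseval_bil:
  "(\<Sum>x\<in>cube n. (\<Sum>S\<in>Pow {..<n}. \<alpha> S * chi n S x) * (\<Sum>R\<in>Pow {..<n}. \<beta> R * chi n R x))
    = 2^n * (\<Sum>S\<in>Pow {..<n}. \<alpha> S * \<beta> S)"
proof -
  have "(\<Sum>x\<in>cube n. (\<Sum>S\<in>Pow {..<n}. \<alpha> S * chi n S x) * (\<Sum>R\<in>Pow {..<n}. \<beta> R * chi n R x))
     = (\<Sum>x\<in>cube n. \<Sum>S\<in>Pow {..<n}. \<Sum>R\<in>Pow {..<n}. \<alpha> S * \<beta> R * (chi n S x * chi n R x))"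
    by (simp add: sum_product algebra_simps)
  also have "\<dots> = (\<Sum>S\<in>Pow {..<n}. \<Sum>R\<in>Pow {..<n}. \<alpha> S * \<beta> R * (\<Sum>x\<in>cube n. chi n S x * chi n R x))"
    by (subst sum.swap, rule sum.cong[OF refl], subst sum.swap) (simp add: sum_distrib_left)
  also have "\<dots> = (\<Sum>S\<in>Pow {..<n}. \<Sum>R\<in>Pow {..<n}. if R = S then \<alpha> S * \<beta> R * 2^n else 0)"
    by (intro sum.cong refl) (auto simp: orth)
  also have "\<dots> = 2^n * (\<Sum>S\<in>Pow {..<n}. \<alpha> S * \<beta> S)"
    by (simp add: sum_distrib_left mult_ac)
  finally show ?thesis .
qed

lemma parseval:
  "(\<Sum>x\<in>cube n. (u x)^2) = 2^n * (\<Sum>S\<in>Pow {..<n}. (hat n u S)^2)"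
proof -
  have "(\<Sum>x\<in>cube n. (u x)^2) = (\<Sum>x\<in>cube n. (\<Sum>S\<in>Pow {..<n}. hat n u S * chi n S x) * (\<Sum>R\<in>Pow {..<n}. hat n u R * chi n R x))"
    by (rule sum.cong[OF refl]) (simp add: expansion power2_eq_square)
  also have "\<dots> = 2^n * (\<Sum>S\<in>Pow {..<n}. (hat n u S)^2)"
    unfolding parseval_bil by (simp add: power2_eq_square)
  finally show ?thesis .
qed



lemma length_flip[simp]: "length (flip x i) = length x" by (simp add: flip_def)

lemma nth_flip: "i < length x \<Longrightarrow> flip x i ! j = (if j = i then \<not> x!i else x!j)"
  by (simp add: flip_def nth_list_update)

lemma flip_cube: "x \<in> cube n \<Longrightarrow> flip x i \<in> cube n" by (simp add: cube_def)

lemma flip_flip: "i < length x \<Longrightarrow> flip (flip x i) i = x"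
  by (simp add: flip_def)

lemma sum_flip_reindex:
  assumes "i < n"
  shows "(\<Sum>x\<in>cube n. h (flip x i)) = (\<Sum>x\<in>cube n. h x)"
proof (rule sum.reindex_bij_witness[where i="\<lambda>x. flip x i" and j="\<lambda>x. flip x i"])
  fix x assume "x \<in> cube n" then show "flip (flip x i) i = x" using assms by (simp add: cube_def flip_flip)
next
  fix x assume "x \<in> cube n" then show "flip (flip x i) i = x" using assms by (simp add: cube_def flip_flip)
qed (auto simp: flip_cube)

lemma chi_flip:
  assumes x: "x \<in> cube n" and i: "i < n"
  shows "chi n R (flip x i) = (if i \<in> R then -1 else 1) * chi n R x"
proof -
  have "chi n R (flip x i) = (\<Prod>j<n. (if j = i then (if i \<in> R then -1 else 1) else 1) * (if j \<in> R then sg (x!j) else 1))"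
    unfolding chi_def
  proof (rule prod.cong[OF refl])
    fix j assume "j \<in> {..<n}"
    show "(if j \<in> R then sg (flip x i ! j) else 1) = (if j = i then (if i \<in> R then -1 else 1) else 1) * (if j \<in> R then sg (x!j) else 1)"
      using x i by (auto simp: nth_flip cube_def sg_def)
  qed
  also have "\<dots> = (if i \<in> R then -1 else 1) * chi n R x"
    unfolding prod.distrib chi_def using i by simp
  finally show ?thesis .
qed

definition Bq :: "nat \<Rightarrow> (bool list \<Rightarrow> real) \<Rightarrow> (bool list \<Rightarrow> real) \<Rightarrow> (bool list \<Rightarrow> real) \<Rightarrow> real" where
  "Bq n q u v = (\<Sum>x\<in>cube n. \<Sum>i<n. u x * v (flip x i) * (q x - q (flip x i)))"

lemma sum_indic_card:
  fixes n :: nat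
  assumes "S \<subseteq> {..<n}"
  shows "(\<Sum>i<n. if i \<in> S then 1 else 0::real) = real (card S)"
proof -
  have "(\<Sum>i<n. if i \<in> S then 1 else 0::real) = (\<Sum>i\<in>{..<n} \<inter> S. 1)"
  proof -
    have fin: "finite {..<n}" by simp
    show ?thesis using sum.inter_restrict[OF fin, of "\<lambda>_. (1::real)" S] by simp
  qed
  also have "{..<n} \<inter> S = S" using assms by auto
  finally show ?thesis by simp
qed

lemma B_chi:
  assumes S: "S \<subseteq> {..<n}" and R: "R \<subseteq> {..<n}"
  shows "Bq n q (chi n S) (chi n R) = 2^(n+1) * (real (card S) - real (card R)) * hat n q (symd S R)"
proof -
  define H where "H = (\<Sum>x\<in>cube n. chi n S x * chi n R x * q x)"
  have H: "H = 2^n * hat n q (symd S R)"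
    unfolding H_def hat_def chi_mult[symmetric] by (simp add: mult_ac)
  have "Bq n q (chi n S) (chi n R) = (\<Sum>i<n. (\<Sum>x\<in>cube n. chi n S x * chi n R (flip x i) * q x)
                  - (\<Sum>x\<in>cube n. chi n S x * chi n R (flip x i) * q (flip x i)))"
    unfolding Bq_def sum_subtractf[symmetric] by (subst sum.swap) (simp add: algebra_simps)
  also have "\<dots> = (\<Sum>i<n. ((if i \<in> R then -1 else 1) - (if i \<in> S then -1 else 1)) * H)"
  proof (rule sum.cong[OF refl])
    fix i assume "i \<in> {..<n}"
    then have i: "i < n" by simp
    have 1: "(\<Sum>x\<in>cube n. chi n S x * chi n R (flip x i) * q x) = (if i \<in> R then -1 else 1) * H"
      unfolding H_def sum_distrib_left by (rule sum.cong[OF refl]) (simp add: chi_flip i)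
    have "(\<Sum>x\<in>cube n. chi n S x * chi n R (flip x i) * q (flip x i))
        = (\<Sum>x\<in>cube n. chi n S (flip (flip x i) i) * chi n R (flip x i) * q (flip x i))"
      by (rule sum.cong[OF refl]) (simp add: flip_flip cube_def i)
    also have "\<dots> = (\<Sum>x\<in>cube n. chi n S (flip x i) * chi n R x * q x)"
      by (rule sum_flip_reindex[OF i, where h="\<lambda>y. chi n S (flip y i) * chi n R y * q y"])
    also have "\<dots> = (if i \<in> S then -1 else 1) * H"
      unfolding H_def sum_distrib_left by (rule sum.cong[OF refl]) (simp add: chi_flip i)
    finally show "(\<Sum>x\<in>cube n. chi n S x * chi n R (flip x i) * q x)
                  - (\<Sum>x\<in>cube n. chi n S x * chi n R (flip x i) * q (flip x i))
          = ((if i \<in> R then -1 else 1) - (if i \<in> S then -1 else 1)) * H"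
      using 1 by (simp add: algebra_simps)
  qed
  also have "\<dots> = 2 * H * ((\<Sum>i<n. if i \<in> S then 1 else 0) - (\<Sum>i<n. if i \<in> R then 1 else 0))"
    unfolding sum_distrib_left sum_subtractf[symmetric] sum_distrib_right
    by (rule sum.cong[OF refl]) auto
  also have "\<dots> = 2^(n+1) * (real (card S) - real (card R)) * hat n q (symd S R)"
    unfolding sum_indic_card[OF S] sum_indic_card[OF R] H by simp
  finally show ?thesis .
qed

lemma swap4:
  "(\<Sum>x\<in>A. \<Sum>i\<in>I. \<Sum>s\<in>P. \<Sum>r\<in>Q. f x i s r) = (\<Sum>s\<in>P. \<Sum>r\<in>Q. \<Sum>x\<in>A. \<Sum>i\<in>I. f x i s r)"
proof -
  have "(\<Sum>x\<in>A. \<Sum>i\<in>I. \<Sum>s\<in>P. \<Sum>r\<in>Q. f x i s r) = (\<Sum>x\<in>A. \<Sum>s\<in>P. \<Sum>i\<in>I. \<Sum>r\<in>Q. f x i s r)"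
    by (rule sum.cong[OF refl], rule sum.swap)
  also have "\<dots> = (\<Sum>x\<in>A. \<Sum>s\<in>P. \<Sum>r\<in>Q. \<Sum>i\<in>I. f x i s r)"
    by (rule sum.cong[OF refl], rule sum.cong[OF refl], rule sum.swap)
  also have "\<dots> = (\<Sum>s\<in>P. \<Sum>x\<in>A. \<Sum>r\<in>Q. \<Sum>i\<in>I. f x i s r)"
    by (rule sum.swap)
  also have "\<dots> = (\<Sum>s\<in>P. \<Sum>r\<in>Q. \<Sum>x\<in>A. \<Sum>i\<in>I. f x i s r)"
    by (rule sum.cong[OF refl], rule sum.swap)
  finally show ?thesis .
qed

lemma B_fourier:
  "Bq n q u v = (\<Sum>S\<in>Pow {..<n}. \<Sum>R\<in>Pow {..<n}. hat n u S * hat n v R * Bq n q (chi n S) (chi n R))"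
proof -
  have "Bq n q u v = (\<Sum>x\<in>cube n. \<Sum>i<n. \<Sum>S\<in>Pow {..<n}. \<Sum>R\<in>Pow {..<n}.
          hat n u S * hat n v R * (chi n S x * chi n R (flip x i) * (q x - q (flip x i))))"
    unfolding Bq_def
  proof (intro sum.cong refl)
    fix x i assume x: "x \<in> cube n"
    have uv: "u x * v (flip x i) = (\<Sum>S\<in>Pow {..<n}. hat n u S * chi n S x) * (\<Sum>R\<in>Pow {..<n}. hat n v R * chi n R (flip x i))"
      using expansion[OF x, of u] expansion[OF flip_cube[OF x, of i], of v] by simp
    show "u x * v (flip x i) * (q x - q (flip x i)) = (\<Sum>S\<in>Pow {..<n}. \<Sum>R\<in>Pow {..<n}.
          hat n u S * hat n v R * (chi n S x * chi n R (flip x i) * (q x - q (flip x i))))"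
      unfolding uv by (subst sum_product, subst sum_distrib_right, rule sum.cong[OF refl], subst sum_distrib_right, rule sum.cong[OF refl]) (simp add: mult_ac)
  qed
  also have "\<dots> = (\<Sum>S\<in>Pow {..<n}. \<Sum>R\<in>Pow {..<n}. \<Sum>x\<in>cube n. \<Sum>i<n.
          hat n u S * hat n v R * (chi n S x * chi n R (flip x i) * (q x - q (flip x i))))"
    by (rule swap4)
  also have "\<dots> = (\<Sum>S\<in>Pow {..<n}. \<Sum>R\<in>Pow {..<n}. hat n u S * hat n v R * Bq n q (chi n S) (chi n R))"
    unfolding Bq_def by (simp add: sum_distrib_left mult.assoc)
  finally show ?thesis .
qed



lemma card_diff_le:
  assumes "finite S" "finite R"
  shows "\<bar>int (card S) - int (card R)\<bar> \<le> int (card (symd S R))"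
proof -
  have 1: "card S = card (S \<inter> R) + card (S - R)" using card_Int_Diff[OF assms(1)] by simp
  have 2: "card R = card (R \<inter> S) + card (R - S)" using card_Int_Diff[OF assms(2)] by simp
  have 3: "card (symd S R) = card (S - R) + card (R - S)"
    unfolding symd_def using assms by (intro card_Un_disjoint) auto
  have "S \<inter> R = R \<inter> S" by auto
  then show ?thesis using 1 2 3 by simp
qed

lemma sum_sq_nonneg: "0 \<le> (\<Sum>x\<in>A. (f x)^2::real)" by (simp add: sum_nonneg)

lemma bnd_lemma:
  assumes qb: "\<forall>x\<in>cube n. \<bar>q x\<bar> \<le> 1"
  shows "\<bar>\<Sum>S\<in>Pow {..<n}. \<Sum>R\<in>Pow {..<n}. \<alpha> S * \<beta> R * hat n q (symd S R)\<bar>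
           \<le> 1 * sqrt (\<Sum>S\<in>Pow {..<n}. (\<alpha> S)^2) * sqrt (\<Sum>R\<in>Pow {..<n}. (\<beta> R)^2)"
proof -
  define A where "A x = (\<Sum>S\<in>Pow {..<n}. \<alpha> S * chi n S x)" for x
  define B where "B x = (\<Sum>R\<in>Pow {..<n}. \<beta> R * chi n R x)" for x
  have eq: "(\<Sum>S\<in>Pow {..<n}. \<Sum>R\<in>Pow {..<n}. \<alpha> S * \<beta> R * hat n q (symd S R))
        = (\<Sum>x\<in>cube n. q x * A x * B x) / 2^n"
  proof -
    have "(\<Sum>x\<in>cube n. q x * A x * B x) = (\<Sum>x\<in>cube n. \<Sum>S\<in>Pow {..<n}. \<Sum>R\<in>Pow {..<n}. \<alpha> S * \<beta> R * (q x * chi n S x * chi n R x))"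
      unfolding A_def B_def by (intro sum.cong refl) (simp add: sum_product sum_distrib_left mult_ac)
    also have "\<dots> = (\<Sum>S\<in>Pow {..<n}. \<Sum>R\<in>Pow {..<n}. \<alpha> S * \<beta> R * (\<Sum>x\<in>cube n. q x * chi n S x * chi n R x))"
      by (subst sum.swap, rule sum.cong[OF refl], subst sum.swap) (simp add: sum_distrib_left)
    also have "\<dots> = (\<Sum>S\<in>Pow {..<n}. \<Sum>R\<in>Pow {..<n}. \<alpha> S * \<beta> R * hat n q (symd S R) * 2^n)"
      by (intro sum.cong refl) (simp add: hat_def chi_mult[symmetric] mult_ac)
    finally show ?thesis by (simp add: sum_distrib_right[symmetric])
  qed
  have "\<bar>\<Sum>x\<in>cube n. q x * A x * B x\<bar> \<le> (\<Sum>x\<in>cube n. \<bar>A x\<bar> * \<bar>B x\<bar>)"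
  proof (rule order_trans[OF sum_abs], rule sum_mono)
    fix x assume "x \<in> cube n"
    then have "\<bar>q x\<bar> \<le> 1" using qb by simp
    then show "\<bar>q x * A x * B x\<bar> \<le> \<bar>A x\<bar> * \<bar>B x\<bar>"
      by (simp add: abs_mult mult_left_le_one_le mult.assoc)
  qed
  also have "\<dots> \<le> L2_set A (cube n) * L2_set B (cube n)" by (rule L2_set_mult_ineq)
  also have "L2_set A (cube n) = sqrt (2^n * (\<Sum>S\<in>Pow {..<n}. (\<alpha> S)^2))"
    unfolding L2_set_def A_def power2_eq_square parseval_bil by simp
  also have "L2_set B (cube n) = sqrt (2^n * (\<Sum>S\<in>Pow {..<n}. (\<beta> S)^2))"
    unfolding L2_set_def B_def power2_eq_square parseval_bil by simp
  also have "sqrt (2^n * (\<Sum>S\<in>Pow {..<n}. (\<alpha> S)^2)) * sqrt (2^n * (\<Sum>S\<in>Pow {..<n}. (\<beta> S)^2))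
     = 2^n * (sqrt (\<Sum>S\<in>Pow {..<n}. (\<alpha> S)^2) * sqrt (\<Sum>S\<in>Pow {..<n}. (\<beta> S)^2))"
  proof -
    have s: "sqrt ((2::real)^n) * sqrt (2^n) = 2^n" by (simp only: real_sqrt_mult_self) simp
    have "sqrt (2^n * (\<Sum>S\<in>Pow {..<n}. (\<alpha> S)^2)) * sqrt (2^n * (\<Sum>S\<in>Pow {..<n}. (\<beta> S)^2))
       = (sqrt (2^n) * sqrt (2^n)) * (sqrt (\<Sum>S\<in>Pow {..<n}. (\<alpha> S)^2) * sqrt (\<Sum>S\<in>Pow {..<n}. (\<beta> S)^2))"
      by (simp only: real_sqrt_mult mult_ac)
    then show ?thesis unfolding s .
  qed
  finally have c: "\<bar>\<Sum>x\<in>cube n. q x * A x * B x\<bar> \<le> 2^n * (sqrt (\<Sum>S\<in>Pow {..<n}. (\<alpha> S)^2) * sqrt (\<Sum>S\<in>Pow {..<n}. (\<beta> S)^2))" .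
  have "\<bar>\<Sum>x\<in>cube n. q x * A x * B x\<bar> / 2^n \<le> sqrt (\<Sum>S\<in>Pow {..<n}. (\<alpha> S)^2) * sqrt (\<Sum>S\<in>Pow {..<n}. (\<beta> S)^2)"
    using c by (simp add: divide_le_eq mult.commute)
  then show ?thesis unfolding eq by (simp add: abs_divide)
qed

lemma core_bound:
  assumes qb: "\<forall>x\<in>cube n. \<bar>q x\<bar> \<le> 1"
    and hv: "\<forall>T. T \<subseteq> {..<n} \<longrightarrow> d < card T \<longrightarrow> hat n q T = 0"
  shows "\<bar>Bq n q u v\<bar> \<le> 2 * real d * sqrt (\<Sum>x\<in>cube n. (u x)^2) * sqrt (\<Sum>x\<in>cube n. (v x)^2)"
proof -
  define X where "X = (\<Sum>S\<in>Pow {..<n}. \<Sum>R\<in>Pow {..<n}. hat n u S * hat n v R * (real (card S) - real (card R)) * hat n q (symd S R))"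
  have BX: "Bq n q u v = 2^(n+1) * X"
  proof -
    have "Bq n q u v = (\<Sum>S\<in>Pow {..<n}. \<Sum>R\<in>Pow {..<n}. 2^(n+1) * (hat n u S * hat n v R * (real (card S) - real (card R)) * hat n q (symd S R)))"
      by (rule trans[OF B_fourier], intro sum.cong refl) (simp add: B_chi mult_ac)
    then show ?thesis unfolding X_def by (simp add: sum_distrib_left)
  qed
  have "\<bar>X\<bar> \<le> real d * 1 * sqrt (\<Sum>S\<in>Pow {..<n}. (hat n u S)^2) * sqrt (\<Sum>R\<in>Pow {..<n}. (hat n v R)^2)"
    unfolding X_def
  proof (rule bernstein_abstract)
    show "finite (Pow {..<n::nat})" by simp
  next
    fix S R assume S: "S \<in> Pow {..<n}" and R: "R \<in> Pow {..<n}" and K: "hat n q (symd S R) \<noteq> 0"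
    have sub: "symd S R \<subseteq> {..<n}" using symd_sub[of S n R] S R by auto
    have "card (symd S R) \<le> d" using hv sub K not_le by blast
    then have cd: "int (card (symd S R)) \<le> int d" by simp
    have "finite S" "finite R" using S R finite_subset by auto
    then show "\<bar>int (card S) - int (card R)\<bar> \<le> int d" using card_diff_le[of S R] cd by linarith
  next
    fix \<alpha> \<beta> show "\<bar>\<Sum>S\<in>Pow {..<n}. \<Sum>R\<in>Pow {..<n}. \<alpha> S * \<beta> R * hat n q (symd S R)\<bar>
           \<le> 1 * sqrt (\<Sum>S\<in>Pow {..<n}. (\<alpha> S)^2) * sqrt (\<Sum>R\<in>Pow {..<n}. (\<beta> R)^2)"
      by (rule bnd_lemma[OF qb])
  qed simp
  then have xb: "\<bar>X\<bar> \<le> real d * sqrt (\<Sum>S\<in>Pow {..<n}. (hat n u S)^2) * sqrt (\<Sum>R\<in>Pow {..<n}. (hat n v R)^2)" by simp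
  have U: "sqrt (\<Sum>x\<in>cube n. (u x)^2) = sqrt (2^n) * sqrt (\<Sum>S\<in>Pow {..<n}. (hat n u S)^2)"
    unfolding parseval by (simp add: real_sqrt_mult)
  have V: "sqrt (\<Sum>x\<in>cube n. (v x)^2) = sqrt (2^n) * sqrt (\<Sum>S\<in>Pow {..<n}. (hat n v S)^2)"
    unfolding parseval by (simp add: real_sqrt_mult)
  have s: "sqrt ((2::real)^n) * sqrt (2^n) = 2^n" by (simp only: real_sqrt_mult_self) simp
  have "\<bar>Bq n q u v\<bar> \<le> 2^(n+1) * (real d * sqrt (\<Sum>S\<in>Pow {..<n}. (hat n u S)^2) * sqrt (\<Sum>R\<in>Pow {..<n}. (hat n v R)^2))"
    unfolding BX abs_mult using xb by (simp add: mult_left_mono)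
  also have "\<dots> = 2 * real d * (sqrt (2^n) * sqrt (\<Sum>S\<in>Pow {..<n}. (hat n u S)^2)) * (sqrt (2^n) * sqrt (\<Sum>R\<in>Pow {..<n}. (hat n v R)^2))"
  proof -
    have "2 * real d * (sqrt (2^n) * sqrt (\<Sum>S\<in>Pow {..<n}. (hat n u S)^2)) * (sqrt (2^n) * sqrt (\<Sum>R\<in>Pow {..<n}. (hat n v R)^2))
       = 2 * real d * (sqrt (2^n) * sqrt (2^n)) * sqrt (\<Sum>S\<in>Pow {..<n}. (hat n u S)^2) * sqrt (\<Sum>R\<in>Pow {..<n}. (hat n v R)^2)"
      by (simp only: mult_ac)
    also have "\<dots> = 2^(n+1) * (real d * sqrt (\<Sum>S\<in>Pow {..<n}. (hat n u S)^2) * sqrt (\<Sum>R\<in>Pow {..<n}. (hat n v R)^2))"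
      unfolding s by (simp add: mult_ac)
    finally show ?thesis by simp
  qed
  finally show ?thesis unfolding U V .
qed



lemma card_supp_le:
  fixes n :: nat and \<alpha> :: "nat \<Rightarrow> nat"
  shows "card {i. i < n \<and> \<alpha> i \<noteq> (0::nat)} \<le> (\<Sum>i<n. \<alpha> i)"
proof -
  have "card {i. i < n \<and> \<alpha> i \<noteq> 0} = (\<Sum>i\<in>{i. i < n \<and> \<alpha> i \<noteq> 0}. 1)" by simp
  also have "\<dots> \<le> (\<Sum>i\<in>{i. i < n \<and> \<alpha> i \<noteq> 0}. \<alpha> i)" by (rule sum_mono) auto
  also have "\<dots> \<le> (\<Sum>i<n. \<alpha> i)" by (rule sum_mono2) auto
  finally show ?thesis .
qed

lemma bit_sg: "sg (x!i) = 1 - 2 * bit x i" by (simp add: sg_def bit_def)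

lemma mono_chi_zero:
  assumes T: "T \<subseteq> {..<n}" and big: "(\<Sum>i<n. \<alpha> i) < card T"
  shows "(\<Sum>x\<in>cube n. (\<Prod>i<n. bit x i ^ \<alpha> i) * chi n T x) = 0"
proof -
  define g where "g i b = (if b then 1 else 0::real) ^ \<alpha> i * (if i \<in> T then sg b else 1)" for i b
  have "\<exists>i\<in>T. \<alpha> i = 0"
  proof (rule ccontr)
    assume "\<not> (\<exists>i\<in>T. \<alpha> i = 0)"
    then have "T \<subseteq> {i. i < n \<and> \<alpha> i \<noteq> 0}" using T by auto
    then have "card T \<le> card {i. i < n \<and> \<alpha> i \<noteq> 0}" by (intro card_mono) auto
    then show False using card_supp_le[of n \<alpha>] big by linarith
  qed
  then obtain i where i: "i \<in> T" "\<alpha> i = 0" by auto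
  have "(\<Sum>x\<in>cube n. (\<Prod>i<n. bit x i ^ \<alpha> i) * chi n T x) = (\<Sum>x\<in>cube n. \<Prod>i<n. g i (x!i))"
    unfolding chi_def prod.distrib[symmetric] g_def by (intro sum.cong prod.cong refl) (simp add: bit_def)
  also have "\<dots> = (\<Prod>i<n. g i True + g i False)" by (rule cube_prod_sum)
  also have "\<dots> = 0" using i T by (intro prod_zero) (auto simp: g_def sg_def intro!: bexI[of _ i])
  finally show ?thesis .
qed

lemma hat_vanish:
  assumes P: "is_poly_deg_le n d q" and T: "T \<subseteq> {..<n}" and big: "d < card T"
  shows "hat n q T = 0"
proof -
  obtain A c where A: "finite A" "\<forall>\<alpha>\<in>A. (\<forall>i\<ge>n. \<alpha> i = 0) \<and> (\<Sum>i<n. \<alpha> i) \<le> d"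
    and q: "\<forall>x\<in>cube n. q x = (\<Sum>\<alpha>\<in>A. c \<alpha> * (\<Prod>i<n. bit x i ^ \<alpha> i))"
    using P unfolding is_poly_deg_le_def by blast
  have "(\<Sum>x\<in>cube n. q x * chi n T x) = (\<Sum>x\<in>cube n. \<Sum>\<alpha>\<in>A. c \<alpha> * ((\<Prod>i<n. bit x i ^ \<alpha> i) * chi n T x))"
    by (intro sum.cong refl) (simp add: q sum_distrib_right mult.assoc)
  also have "\<dots> = (\<Sum>\<alpha>\<in>A. c \<alpha> * (\<Sum>x\<in>cube n. (\<Prod>i<n. bit x i ^ \<alpha> i) * chi n T x))"
    by (subst sum.swap) (simp add: sum_distrib_left)
  also have "\<dots> = 0"
  proof (rule sum.neutral, rule ballI)
    fix \<alpha> assume "\<alpha> \<in> A"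
    then have "(\<Sum>i<n. \<alpha> i) < card T" using A big by force
    then show "c \<alpha> * (\<Sum>x\<in>cube n. (\<Prod>i<n. bit x i ^ \<alpha> i) * chi n T x) = 0"
      using mono_chi_zero[OF T] by simp
  qed
  finally show ?thesis unfolding hat_def by simp
qed

definition ind :: "nat set \<Rightarrow> nat \<Rightarrow> nat" where "ind R i = (if i \<in> R then 1 else 0)"

lemma chi_expand:
  assumes S: "S \<subseteq> {..<n}"
  shows "chi n S x = (\<Sum>R\<in>Pow {..<n}. (if R \<subseteq> S then (-2)^card R else 0) * (\<Prod>i\<in>R. bit x i))"
proof -
  have fS: "finite S" using S finite_subset by auto
  have "chi n S x = (\<Prod>i\<in>S. (-2) * bit x i + 1)"
  proof -
    have "chi n S x = (\<Prod>i<n. if i \<in> S then (-2) * bit x i + 1 else 1)"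
      unfolding chi_def bit_sg by (rule prod.cong) (auto simp: algebra_simps)
    also have "\<dots> = (\<Prod>i\<in>{..<n} \<inter> S. (-2) * bit x i + 1)"
      by (rule prod.inter_restrict[symmetric]) simp
    also have "{..<n} \<inter> S = S" using S by auto
    finally show ?thesis .
  qed
  also have "\<dots> = (\<Sum>R\<in>Pow S. (\<Prod>i\<in>R. (-2) * bit x i) * (\<Prod>i\<in>S - R. 1))"
    by (rule prod_add[OF fS])
  also have "\<dots> = (\<Sum>R\<in>Pow S. (-2)^card R * (\<Prod>i\<in>R. bit x i))"
  proof (intro sum.cong refl)
    fix R
    have "(\<Prod>i\<in>R. (-2) * bit x i) = (-2)^card R * (\<Prod>i\<in>R. bit x i)"
      by (simp only: prod.distrib prod_constant)
    then show "(\<Prod>i\<in>R. (-2) * bit x i) * (\<Prod>i\<in>S - R. 1) = (-2)^card R * (\<Prod>i\<in>R. bit x i)" by simp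
  qed
  also have "\<dots> = (\<Sum>R\<in>Pow {..<n} \<inter> Pow S. (-2)^card R * (\<Prod>i\<in>R. bit x i))"
    using S by (intro sum.cong refl) auto
  also have "\<dots> = (\<Sum>R\<in>Pow {..<n}. (if R \<subseteq> S then (-2)^card R else 0) * (\<Prod>i\<in>R. bit x i))"
    by (subst sum.inter_restrict) (auto intro!: sum.cong)
  finally show ?thesis .
qed

lemma poly_exists: "is_poly_deg_le n n Q"
proof -
  define C where "C R = (\<Sum>S\<in>Pow {..<n}. hat n Q S * (if R \<subseteq> S then (-2)^card R else 0))" for R
  define c where "c \<alpha> = C {i. \<alpha> i \<noteq> 0}" for \<alpha> :: "nat \<Rightarrow> nat"
  have inj: "inj_on ind (Pow {..<n})"
  proof (rule inj_onI)
    fix R R' assume "ind R = ind R'"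
    then have "\<And>i. ind R i = ind R' i" by simp
    show "R = R'"
    proof (rule set_eqI)
      fix i show "i \<in> R \<longleftrightarrow> i \<in> R'" using \<open>\<And>i. ind R i = ind R' i\<close>[of i]
        unfolding ind_def by (auto split: if_splits)
    qed
  qed
  have supp: "{i. ind R i \<noteq> 0} = R" for R by (auto simp: ind_def)
  show ?thesis unfolding is_poly_deg_le_def
  proof (intro exI conjI ballI)
    show "finite (ind ` Pow {..<n})" by simp
  next
    fix \<alpha> assume "\<alpha> \<in> ind ` Pow {..<n}"
    then obtain R where R: "R \<subseteq> {..<n}" "\<alpha> = ind R" by auto
    show "\<forall>i\<ge>n. \<alpha> i = 0" using R by (auto simp: ind_def)
    have "(\<Sum>i<n. \<alpha> i) = card ({..<n} \<inter> R)" unfolding R ind_def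
      by (simp add: sum.inter_restrict[symmetric])
    also have "\<dots> \<le> n" by (metis card_lessThan card_mono finite_lessThan inf_le1)
    finally show "(\<Sum>i<n. \<alpha> i) \<le> n" .
  next
    fix x assume x: "x \<in> cube n"
    have "Q x = (\<Sum>S\<in>Pow {..<n}. hat n Q S * chi n S x)" using expansion[OF x] by simp
    also have "\<dots> = (\<Sum>S\<in>Pow {..<n}. \<Sum>R\<in>Pow {..<n}. hat n Q S * ((if R \<subseteq> S then (-2)^card R else 0) * (\<Prod>i\<in>R. bit x i)))"
      by (intro sum.cong refl) (auto simp: chi_expand sum_distrib_left)
    also have "\<dots> = (\<Sum>R\<in>Pow {..<n}. C R * (\<Prod>i\<in>R. bit x i))"
      unfolding C_def sum_distrib_right by (subst sum.swap) (simp add: mult.assoc)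
    also have "\<dots> = (\<Sum>R\<in>Pow {..<n}. c (ind R) * (\<Prod>i<n. bit x i ^ ind R i))"
    proof (intro sum.cong refl)
      fix R assume R: "R \<in> Pow {..<n}"
      have "(\<Prod>i<n. bit x i ^ ind R i) = (\<Prod>i<n. if i \<in> R then bit x i else 1)"
        by (intro prod.cong refl) (simp add: ind_def)
      also have "\<dots> = (\<Prod>i\<in>{..<n} \<inter> R. bit x i)" by (simp add: prod.inter_restrict)
      also have "{..<n} \<inter> R = R" using R by auto
      finally show "C R * (\<Prod>i\<in>R. bit x i) = c (ind R) * (\<Prod>i<n. bit x i ^ ind R i)"
        unfolding c_def supp by simp
    qed
    also have "\<dots> = (\<Sum>\<alpha>\<in>ind ` Pow {..<n}. c \<alpha> * (\<Prod>i<n. bit x i ^ \<alpha> i))"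
      by (rule sum.reindex[OF inj, unfolded comp_def, symmetric])
    finally show "Q x = (\<Sum>\<alpha>\<in>ind ` Pow {..<n}. c \<alpha> * (\<Prod>i<n. bit x i ^ \<alpha> i))" .
  qed
qed



lemma flip_inj: "x \<in> cube n \<Longrightarrow> inj_on (flip x) {..<n}"
proof (rule inj_onI)
  fix i j assume x: "x \<in> cube n" and i: "i \<in> {..<n}" and j: "j \<in> {..<n}" and eq: "flip x i = flip x j"
  show "i = j"
  proof (rule ccontr)
    assume "i \<noteq> j"
    have "flip x i ! i = flip x j ! i" using eq by simp
    then show False using x i j \<open>i \<noteq> j\<close> by (simp add: nth_flip cube_def)
  qed
qed

lemma diff_set_flip:
  assumes "x \<in> cube n" "i < n"
  shows "{j. j < n \<and> x!j \<noteq> flip x i ! j} = {i}"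
  using assms by (auto simp: nth_flip cube_def)

lemma adj_flip:
  assumes "x \<in> cube n" "i < n"
  shows "sens_adj n f x (flip x i) = (if f x \<noteq> f (flip x i) then 1 else 0)"
  using assms flip_cube[OF assms(1)] diff_set_flip[OF assms] by (simp add: sens_adj_def)

lemma adj_zero:
  assumes x: "x \<in> cube n" and y: "y \<in> cube n" and ny: "y \<notin> flip x ` {..<n}"
  shows "sens_adj n f x y = 0"
proof (rule ccontr)
  assume "sens_adj n f x y \<noteq> 0"
  then have "card {j. j < n \<and> x!j \<noteq> y!j} = 1" by (simp add: sens_adj_def split: if_splits)
  then obtain i where i: "{j. j < n \<and> x!j \<noteq> y!j} = {i}" by (rule card_1_singletonE)
  then have "i < n" "x!i \<noteq> y!i" by auto
  have "y = flip x i"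
  proof (rule nth_equalityI)
    show "length y = length (flip x i)" using x y by (simp add: cube_def)
  next
    fix j assume "j < length y"
    then have j: "j < n" using y by (simp add: cube_def)
    show "y ! j = flip x i ! j"
    proof (cases "j = i")
      case True then show ?thesis using \<open>x!i \<noteq> y!i\<close> \<open>i < n\<close> x by (simp add: nth_flip cube_def)
    next
      case False
      then have "j \<notin> {j. j < n \<and> x!j \<noteq> y!j}" using i by simp
      then show ?thesis using False j x \<open>i < n\<close> by (simp add: nth_flip cube_def)
    qed
  qed
  then show False using ny \<open>i < n\<close> by auto
qed

lemma adj_sum:
  assumes x: "x \<in> cube n"
  shows "(\<Sum>y\<in>cube n. sens_adj n f x y * c y) = (\<Sum>i<n. sens_adj n f x (flip x i) * c (flip x i))"
proof -
  have "(\<Sum>y\<in>cube n. sens_adj n f x y * c y) = (\<Sum>y\<in>flip x ` {..<n}. sens_adj n f x y * c y)"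
    by (rule sum.mono_neutral_right) (auto simp: flip_cube[OF x] adj_zero[OF x])
  also have "\<dots> = (\<Sum>i<n. sens_adj n f x (flip x i) * c (flip x i))"
    by (rule sum.reindex[OF flip_inj[OF x], unfolded comp_def])
  finally show ?thesis .
qed

definition Fs :: "(bool list \<Rightarrow> bool) \<Rightarrow> bool list \<Rightarrow> real" where
  "Fs f x = (if f x then 1 else -1)"

lemma edge_ineq:
  assumes e: "0 < 1 - 2*\<epsilon>" and ap: "eps_approx n \<epsilon> f q" and x: "x \<in> cube n" and y: "y \<in> cube n"
    and bx: "bx \<ge> 0" and cy: "cy \<ge> 0"
  shows "(if f x \<noteq> f y then 1 else 0) * bx * cy \<le> bx * cy * ((q x - q y) * (Fs f x - Fs f y) / (4 * (1 - 2*\<epsilon>)))"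
proof (cases "f x = f y")
  case True then show ?thesis by (simp add: Fs_def)
next
  case False
  have qx: "f x \<longrightarrow> 1 - 2*\<epsilon> \<le> q x" "\<not> f x \<longrightarrow> q x \<le> -1 + 2*\<epsilon>" using ap x unfolding eps_approx_def by auto
  have qy: "f y \<longrightarrow> 1 - 2*\<epsilon> \<le> q y" "\<not> f y \<longrightarrow> q y \<le> -1 + 2*\<epsilon>" using ap y unfolding eps_approx_def by auto
  have "4 * (1 - 2*\<epsilon>) \<le> (q x - q y) * (Fs f x - Fs f y)"
    using False qx qy by (cases "f x") (auto simp: Fs_def)
  then have "1 \<le> (q x - q y) * (Fs f x - Fs f y) / (4 * (1 - 2*\<epsilon>))" using e by simp
  then have "bx * cy * 1 \<le> bx * cy * ((q x - q y) * (Fs f x - Fs f y) / (4 * (1 - 2*\<epsilon>)))"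
    using bx cy by (intro mult_left_mono) auto
  then show ?thesis using False by simp
qed

lemma bil:
  assumes e0: "0 \<le> \<epsilon>" and e1: "\<epsilon> < 1/2"
    and P: "is_poly_deg_le n D q" and ap: "eps_approx n \<epsilon> f q"
    and b: "\<And>x. b x \<ge> 0" and c: "\<And>x. c x \<ge> 0"
  shows "(\<Sum>x\<in>cube n. \<Sum>y\<in>cube n. sens_adj n f x y * b x * c y)
          \<le> (1 / (1 - 2*\<epsilon>)) * real D * sqrt (\<Sum>x\<in>cube n. (b x)^2) * sqrt (\<Sum>x\<in>cube n. (c x)^2)"
proof -
  define e where "e = 1 - 2*\<epsilon>"
  have e: "0 < e" using e1 by (simp add: e_def)
  have e': "0 < 1 - 2*\<epsilon>" using e1 by simp
  have qb: "\<forall>x\<in>cube n. \<bar>q x\<bar> \<le> 1"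
  proof
    fix x assume "x \<in> cube n"
    then show "\<bar>q x\<bar> \<le> 1" using ap e0 e1 unfolding eps_approx_def by (cases "f x") auto
  qed
  have hv: "\<forall>T. T \<subseteq> {..<n} \<longrightarrow> D < card T \<longrightarrow> hat n q T = 0"
    using hat_vanish[OF P] by blast
  define sb where "sb = sqrt (\<Sum>x\<in>cube n. (b x)^2)"
  define sc where "sc = sqrt (\<Sum>x\<in>cube n. (c x)^2)"
  have Fb: "(\<Sum>x\<in>cube n. (Fs f x * b x)^2) = (\<Sum>x\<in>cube n. (b x)^2)"
    by (intro sum.cong refl) (simp add: Fs_def power_mult_distrib)
  have Fc: "(\<Sum>x\<in>cube n. (Fs f x * c x)^2) = (\<Sum>x\<in>cube n. (c x)^2)"
    by (intro sum.cong refl) (simp add: Fs_def power_mult_distrib)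
  have "(\<Sum>x\<in>cube n. \<Sum>y\<in>cube n. sens_adj n f x y * b x * c y)
      = (\<Sum>x\<in>cube n. \<Sum>i<n. sens_adj n f x (flip x i) * (b x * c (flip x i)))"
  proof (rule sum.cong[OF refl])
    fix x assume x: "x \<in> cube n"
    show "(\<Sum>y\<in>cube n. sens_adj n f x y * b x * c y) = (\<Sum>i<n. sens_adj n f x (flip x i) * (b x * c (flip x i)))"
      using adj_sum[OF x, of f "\<lambda>y. b x * c y"] by (simp add: mult.assoc)
  qed
  also have "\<dots> \<le> (\<Sum>x\<in>cube n. \<Sum>i<n. b x * c (flip x i) * ((q x - q (flip x i)) * (Fs f x - Fs f (flip x i)) / (4 * e)))"
  proof (intro sum_mono)
    fix x i assume x: "x \<in> cube n" and i: "i \<in> {..<n}"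
    show "sens_adj n f x (flip x i) * (b x * c (flip x i)) \<le> b x * c (flip x i) * ((q x - q (flip x i)) * (Fs f x - Fs f (flip x i)) / (4 * e))"
    proof -
      have i': "i < n" using i by simp
      have "sens_adj n f x (flip x i) * (b x * c (flip x i)) = (if f x \<noteq> f (flip x i) then 1 else 0) * b x * c (flip x i)"
        unfolding adj_flip[OF x i'] by (rule mult.assoc[symmetric])
      also have "\<dots> \<le> b x * c (flip x i) * ((q x - q (flip x i)) * (Fs f x - Fs f (flip x i)) / (4 * e))"
        unfolding e_def by (rule edge_ineq[OF e' ap x flip_cube[OF x, of i] b c])
      finally show ?thesis .
    qed
  qed
  also have "\<dots> = (Bq n q (\<lambda>x. Fs f x * b x) c - Bq n q b (\<lambda>y. Fs f y * c y)) / (4 * e)"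
    unfolding Bq_def sum_subtractf[symmetric] sum_divide_distrib
    by (intro sum.cong refl) (simp add: algebra_simps)
  also have "\<dots> \<le> (\<bar>Bq n q (\<lambda>x. Fs f x * b x) c\<bar> + \<bar>Bq n q b (\<lambda>y. Fs f y * c y)\<bar>) / (4 * e)"
    using e by (intro divide_right_mono) auto
  also have "\<dots> \<le> (2 * real D * sb * sc + 2 * real D * sb * sc) / (4 * e)"
  proof (intro divide_right_mono add_mono)
    show "\<bar>Bq n q (\<lambda>x. Fs f x * b x) c\<bar> \<le> 2 * real D * sb * sc"
      using core_bound[OF qb hv, of "\<lambda>x. Fs f x * b x" c] unfolding Fb sb_def sc_def .
    show "\<bar>Bq n q b (\<lambda>y. Fs f y * c y)\<bar> \<le> 2 * real D * sb * sc"
      using core_bound[OF qb hv, of b "\<lambda>y. Fs f y * c y"] unfolding Fc sb_def sc_def .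
  qed (use e in auto)
  also have "\<dots> = (1 / (1 - 2*\<epsilon>)) * real D * sb * sc"
    using e unfolding e_def by (simp add: field_simps)
  finally show ?thesis unfolding sb_def sc_def .
qed

theorem theorem4p12:
  fixes n :: nat and f :: "bool list \<Rightarrow> bool" and \<epsilon> :: real
  assumes "0 \<le> \<epsilon>" and "\<epsilon> < 1/2"
  shows "sens_lambda n f \<le> (1 / (1 - 2*\<epsilon>)) * real (approx_deg n \<epsilon> f)"
proof -
  define D where "D = approx_deg n \<epsilon> f"
  define K where "K = (1 / (1 - 2*\<epsilon>)) * real D"
  have K0: "K \<ge> 0" using assms unfolding K_def by simp
  have ex: "\<exists>d q. is_poly_deg_le n d q \<and> eps_approx n \<epsilon> f q"
  proof (intro exI conjI)
    show "is_poly_deg_le n n (Fs f)" by (rule poly_exists)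
    show "eps_approx n \<epsilon> f (Fs f)" using assms unfolding eps_approx_def Fs_def by auto
  qed
  have "\<exists>q. is_poly_deg_le n D q \<and> eps_approx n \<epsilon> f q"
    unfolding D_def approx_deg_def using ex by (rule LeastI_ex)
  then obtain q where P: "is_poly_deg_le n D q" and ap: "eps_approx n \<epsilon> f q" by blast
  let ?S = "{sqrt (\<Sum>x\<in>cube n. (\<Sum>y\<in>cube n. sens_adj n f x y * v y)^2) | v.
            (\<Sum>x\<in>cube n. (v x)^2) = 1}"
  have ne: "?S \<noteq> {}"
  proof -
    define v0 where "v0 y = (if y = replicate n False then 1 else (0::real))" for y
    have "replicate n False \<in> cube n" by (simp add: cube_def)
    then have "(\<Sum>x\<in>cube n. (v0 x)^2) = 1"
    proof -
      assume m: "replicate n False \<in> cube n"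
      have "(\<Sum>x\<in>cube n. (v0 x)^2) = (\<Sum>x\<in>cube n. if x = replicate n False then 1 else 0)"
        by (intro sum.cong refl) (simp add: v0_def)
      also have "\<dots> = 1" using m by simp
      finally show ?thesis .
    qed
    then show ?thesis by blast
  qed
  have "Sup ?S \<le> K"
  proof (rule cSup_least[OF ne])
    fix s assume "s \<in> ?S"
    then obtain v where s: "s = sqrt (\<Sum>x\<in>cube n. (\<Sum>y\<in>cube n. sens_adj n f x y * v y)^2)"
      and v: "(\<Sum>x\<in>cube n. (v x)^2) = 1" by blast
    define w where "w x = (\<Sum>y\<in>cube n. sens_adj n f x y * v y)" for x
    define nw where "nw = sqrt (\<Sum>x\<in>cube n. (w x)^2)"
    have a0: "sens_adj n f x y \<ge> 0" for x y by (simp add: sens_adj_def)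
    have "(\<Sum>x\<in>cube n. (w x)^2) = (\<Sum>x\<in>cube n. \<Sum>y\<in>cube n. sens_adj n f x y * w x * v y)"
      unfolding w_def power2_eq_square by (intro sum.cong refl) (simp add: sum_distrib_left sum_distrib_right mult_ac)
    also have "\<dots> \<le> (\<Sum>x\<in>cube n. \<Sum>y\<in>cube n. sens_adj n f x y * \<bar>w x\<bar> * \<bar>v y\<bar>)"
    proof (intro sum_mono)
      fix x y
      have "sens_adj n f x y * (w x * v y) \<le> sens_adj n f x y * (\<bar>w x\<bar> * \<bar>v y\<bar>)"
        using a0[of x y] by (intro mult_left_mono) (auto simp: abs_mult[symmetric])
      then show "sens_adj n f x y * w x * v y \<le> sens_adj n f x y * \<bar>w x\<bar> * \<bar>v y\<bar>" by (simp add: mult.assoc)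
    qed
    also have "\<dots> \<le> K * sqrt (\<Sum>x\<in>cube n. \<bar>w x\<bar>^2) * sqrt (\<Sum>x\<in>cube n. \<bar>v x\<bar>^2)"
      unfolding K_def by (rule bil[OF assms P ap]) auto
    also have "\<dots> = K * nw" unfolding nw_def using v by simp
    finally have "nw^2 \<le> K * nw" unfolding nw_def by (simp add: sum_nonneg)
    then have sq: "nw * nw \<le> K * nw" by (simp add: power2_eq_square)
    have nw0: "nw \<ge> 0" unfolding nw_def by (simp add: sum_nonneg)
    have "nw \<le> K"
    proof (cases "nw = 0")
      case True then show ?thesis using K0 by simp
    next
      case False
      then have "nw > 0" using nw0 by simp
      then show ?thesis using sq mult_le_cancel_right_pos[of nw nw K] by simp
    qed
    then show "s \<le> K" unfolding s nw_def w_def .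
  qed
  then show ?thesis unfolding sens_lambda_def K_def D_def .
qed

end
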